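(* Let $n\ge 1$ and let $M=\Gamma(H\,\overrightarrow{\times}\,G,(u,0))$, where $(H,u)$ is a linearly ordered group with strong unit $u$ and $G$ is a Dedekind $\sigma$-complete $\ell$-group. Let $x:\mathcal B(\mathbb R^n)\to M$ be an $n$-dimensional observable and define $F:\mathbb R^n\to M$ by $$F(t_1,\ldots,t_n)=x\big((-\infty,t_1)\times\cdots\times(-\infty,t_n)\big).$$ Then: (1) $F(s_1,\ldots,s_n)\le F(t_1,\ldots,t_n)$ whenever $s_i\le t_i$ for all $i$; (2) $\bigvee_{(s_1,\ldots,s_n)\in\mathbb R^n}F(s_1,\ldots,s_n)$ exists in $M$ and equals $1=(u,0)$; (3) for every $(t_1,\ldots,t_n)\in\mathbb R^n$, $\bigvee_{(s_1,\ldots,s_n)\ll(t_1,\ldots,t_n)}F(s_1,\ldots,s_n)$ exists and equals $F(t_1,\ldots,t_n)$; (4) for every $i\in\{1,\ldots,n\}$ and all $s_1,\ldots,s_n\in\mathbb R$, $\bigwedge_{t_i\in\mathbb R}F(s_1,\ldots,s_{i-1},t_i,s_{i+1},\ldots,s_n)$ exists and equals $0$; (5) (volume condition) for all reals $a_i\le b_i$, $i=1,\ldots,n$, $$1\ge \Delta_1(a_1,b_1)\big(\cdots\big(\Delta_n(a_n,b_n)F(s_1,\ldots,s_n)\big)\cdots\big)\ge 0,$$ where for a map $K:\mathbb R^n\to H\,\overrightarrow{\times}\,G$, $\Delta_i(a_i,b_i)K(s_1,\ldots,s_n)=K(s_1,\ldots,s_{i-1},b_i,s_{i+1},\ldots,s_n)-K(s_1,\ldots,s_{i-1},a_i,s_{i+1},\ldots,s_n)$,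 the subtraction being computed in the group $H\,\overrightarrow{\times}\,G$.
   Context: For po-groups $H,G$, $H\,\overrightarrow{\times}\,G$ is the group $H\times G$ with the lexicographic order: $(h_1,g_1)\le(h_2,g_2)$ iff $h_1<h_2$, or $h_1=h_2$ and $g_1\le g_2$. For a unital $\ell$-group $(K,v)$, $\Gamma(K,v)$ is the MV-algebra $([0,v];\oplus,',0,v)$ with $a\oplus b=(a+b)\wedge v$, $a'=v-a$. A $\ell$-group $G$ is Dedekind $\sigma$-complete if every countable subset bounded above has a supremum. On $M$ a partial addition is defined: $a+b$ is defined iff $a\le b'$ and then $a+b$ is the group sum. A sequence $(a_m)_m$ in $M$ is summable if every finite subfamily has a (finite, iterated) sum in $M$; its sum $\sum_m a_m$ is the supremum in $M$ of all finite partial sums, if it exists. An $n$-dimensional observable is a map $x:\mathcal B(\mathbb R^n)\to M$ (Borel sets) with $x(\mathbb R^n)=1$ such that for every sequence $(A_m)_m$ of pairwise disjoint Borel sets, $(x(A_m))_m$ is summable and $x(\bigcup_m A_m)=\sum_m x(A_m)$. For $\mathbf s,\mathbf t\in\mathbb R^n$, $\mathbf s\ll\mathbf t$ means $s_i<t_i$ for all $i$. *)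

theory Defs
  imports "HOL-Analysis.Analysis" "HOL-Library.Lattice_Algebras" "HOL-Library.Product_Plus"
begin

(* Lexicographic order on H x G (the po-group H lex-times G); group operations on pairs
   are the componentwise ones from Product_Plus. *)
definition lex_le :: "'h::linordered_ab_group_add \<times> 'g::lattice_ab_group_add \<Rightarrow> 'h \<times> 'g \<Rightarrow> bool" where
  "lex_le p q \<longleftrightarrow> fst p < fst q \<or> (fst p = fst q \<and> snd p \<le> snd q)"

definition strong_unit :: "'h::linordered_ab_group_add \<Rightarrow> bool" where
  "strong_unit u \<longleftrightarrow> 0 \<le> u \<and> (\<forall>h. \<exists>k::nat. h \<le> (\<Sum>_\<in>{..<k}. u))"

definition dedekind_sigma_complete :: "'g::lattice_ab_group_add itself \<Rightarrow> bool" where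
  "dedekind_sigma_complete _ \<longleftrightarrow>
     (\<forall>S::'g set. countable S \<and> S \<noteq> {} \<and> (\<exists>b. \<forall>a\<in>S. a \<le> b) \<longrightarrow>
        (\<exists>s. (\<forall>a\<in>S. a \<le> s) \<and> (\<forall>b. (\<forall>a\<in>S. a \<le> b) \<longrightarrow> s \<le> b)))"

definition Mset :: "'h::linordered_ab_group_add \<Rightarrow> ('h \<times> 'g::lattice_ab_group_add) set" where
  "Mset u = {a. lex_le (0,0) a \<and> lex_le a (u,0)}"

definition is_sup_M :: "'h::linordered_ab_group_add \<Rightarrow> ('h \<times> 'g::lattice_ab_group_add) set \<Rightarrow> 'h \<times> 'g \<Rightarrow> bool" where
  "is_sup_M u S s \<longleftrightarrow> s \<in> Mset u \<and> (\<forall>a\<in>S. lex_le a s) \<and>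
     (\<forall>b\<in>Mset u. (\<forall>a\<in>S. lex_le a b) \<longrightarrow> lex_le s b)"

definition is_inf_M :: "'h::linordered_ab_group_add \<Rightarrow> ('h \<times> 'g::lattice_ab_group_add) set \<Rightarrow> 'h \<times> 'g \<Rightarrow> bool" where
  "is_inf_M u S s \<longleftrightarrow> s \<in> Mset u \<and> (\<forall>a\<in>S. lex_le s a) \<and>
     (\<forall>b\<in>Mset u. (\<forall>a\<in>S. lex_le b a) \<longrightarrow> lex_le b s)"

(* A sequence in M is summable iff every finite subfamily has a (iterated partial) sum in M;
   as all terms are >= 0 this is: the group sum of every finite subfamily lies in M. *)
definition summable_M :: "'h::linordered_ab_group_add \<Rightarrow> (nat \<Rightarrow> 'h \<times> 'g::lattice_ab_group_add) \<Rightarrow> bool" where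
  "summable_M u a \<longleftrightarrow> (\<forall>m. a m \<in> Mset u) \<and> (\<forall>F. finite F \<longrightarrow> sum a F \<in> Mset u)"

definition has_sum_M :: "'h::linordered_ab_group_add \<Rightarrow> (nat \<Rightarrow> 'h \<times> 'g::lattice_ab_group_add) \<Rightarrow> 'h \<times> 'g \<Rightarrow> bool" where
  "has_sum_M u a s \<longleftrightarrow> summable_M u a \<and> is_sup_M u {sum a F | F. finite F} s"

definition observable :: "'h::linordered_ab_group_add \<Rightarrow> ((real^'n) set \<Rightarrow> 'h \<times> 'g::lattice_ab_group_add) \<Rightarrow> bool" where
  "observable u x \<longleftrightarrow>
     (\<forall>A \<in> sets (borel :: (real^'n) measure). x A \<in> Mset u) \<and>
     x UNIV = (u, 0) \<and>
     (\<forall>A :: nat \<Rightarrow> (real^'n) set. range A \<subseteq> sets borel \<and> disjoint_family A \<longrightarrow>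
        has_sum_M u (\<lambda>m. x (A m)) (x (\<Union>m. A m)))"

definition distr_fun :: "((real^'n) set \<Rightarrow> 'a) \<Rightarrow> real^'n \<Rightarrow> 'a" where
  "distr_fun x t = x {y. \<forall>i. y $ i < t $ i}"

definition vupd :: "real^'n \<Rightarrow> 'n \<Rightarrow> real \<Rightarrow> real^'n" where
  "vupd s i r = (\<chi> j. if j = i then r else s $ j)"

definition Delta :: "'n \<Rightarrow> real \<Rightarrow> real \<Rightarrow> (real^'n \<Rightarrow> 'c::ab_group_add) \<Rightarrow> real^'n \<Rightarrow> 'c" where
  "Delta i a b K = (\<lambda>s. K (vupd s i b) - K (vupd s i a))"

(* Delta_1(a_1,b_1)( ... (Delta_n(a_n,b_n) K) ... ), indices 1..n being the elements of the
   finite linearly ordered index type 'n in increasing order *)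
definition Delta_all :: "(real, 'n::{finite,linorder}) vec \<Rightarrow> (real, 'n) vec \<Rightarrow> ((real, 'n) vec \<Rightarrow> 'c::ab_group_add) \<Rightarrow> (real, 'n) vec \<Rightarrow> 'c" where
  "Delta_all a b K = foldr (\<lambda>i K'. Delta i (a $ i) (b $ i) K') (sorted_list_of_set (UNIV :: 'n set)) K"

end

theory Submission imports Defs begin

lemma lex_le_refl[simp]: "lex_le p p" unfolding lex_le_def by simp
lemma lex_le_trans: "lex_le p q \<Longrightarrow> lex_le q r \<Longrightarrow> lex_le p r"
  unfolding lex_le_def by (auto intro: order_trans)
declare lex_le_trans[trans]

lemma vupd_nth[simp]: "vupd s i r $ j = (if j = i then r else s $ j)" by (simp add: vupd_def)

lemma lex_le_antisym: "lex_le p q \<Longrightarrow> lex_le q p \<Longrightarrow> p = q"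
  unfolding lex_le_def by (auto simp: prod_eq_iff)
lemma lex_le_add_mono: "lex_le p q \<Longrightarrow> lex_le r s \<Longrightarrow> lex_le (p+r) (q+s)"
  unfolding lex_le_def by (auto simp: add_strict_mono add_mono add_less_le_mono add_le_less_mono)
lemma lex_le_diff: "lex_le p q \<longleftrightarrow> lex_le 0 (q - p)"
  unfolding lex_le_def by auto
lemma lex_le_diff_anti: "lex_le p q \<Longrightarrow> lex_le (r - q) (r - p)"
  unfolding lex_le_def by auto
lemma lex_le_sum_nonneg: "(\<And>m. m \<in> F \<Longrightarrow> lex_le 0 (a m)) \<Longrightarrow> lex_le 0 (sum a F)"
proof (induction F rule: infinite_finite_induct)
  case (insert m F)
  then have "lex_le (0 + 0) (a m + sum a F)" by (intro lex_le_add_mono) auto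
  then show ?case using insert by simp
qed auto
lemma lex_le_sum_mono:
  assumes "finite G" "F \<subseteq> G" "\<And>m. m \<in> G \<Longrightarrow> lex_le 0 (a m)"
  shows "lex_le (sum a F) (sum a G)"
proof -
  have "sum a G = sum a (G - F) + sum a F" using assms by (simp add: sum.subset_diff)
  moreover have "lex_le (0 + sum a F) (sum a (G - F) + sum a F)"
    using assms by (intro lex_le_add_mono lex_le_sum_nonneg) auto
  ultimately show ?thesis by simp
qed

lemma Mset_iff: "p \<in> Mset u \<longleftrightarrow> lex_le 0 p \<and> lex_le p (u, 0)"
  unfolding Mset_def by (simp add: zero_prod_def)

lemma obs_Mset: "observable u x \<Longrightarrow> A \<in> sets borel \<Longrightarrow> x A \<in> Mset u"
  unfolding observable_def by auto

lemma obs_empty: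
  assumes obs: "observable u x"
  shows "x {} = 0"
proof -
  let ?e = "x {}"
  have "has_sum_M u (\<lambda>m. x ((\<lambda>_::nat. {}) m)) (x (\<Union>m. (\<lambda>_. {}) m))"
    using obs unfolding observable_def by (auto simp: disjoint_family_on_def)
  then have "has_sum_M u (\<lambda>m::nat. x {}) (x {})" by simp
  then have hs: "is_sup_M u {sum (\<lambda>m::nat. ?e) F | F. finite F} ?e"
    unfolding has_sum_M_def by (rule conjunct2)
  have "sum (\<lambda>m::nat. ?e) {0, 1::nat} \<in> {sum (\<lambda>m::nat. ?e) F | F. finite F}" by blast
  with hs have "lex_le (sum (\<lambda>m::nat. ?e) {0, 1::nat}) ?e" unfolding is_sup_M_def by blast
  then have "lex_le (?e + ?e) (?e + 0)" by simp
  then have 1: "lex_le ?e 0" unfolding lex_le_def by auto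
  have "lex_le 0 ?e" using obs_Mset[OF obs, of "{}"] by (simp add: Mset_iff)
  with 1 show ?thesis using lex_le_antisym by blast
qed

lemma has_sum_fin:
  assumes hs: "has_sum_M u a s" and z: "\<And>m. m \<ge> N \<Longrightarrow> a m = 0"
  shows "s = sum a {..<N}"
proof -
  have sm: "summable_M u a" and sup: "is_sup_M u {sum a F | F. finite F} s"
    using hs unfolding has_sum_M_def by auto
  have nn: "lex_le 0 (a m)" for m using sm unfolding summable_M_def Mset_iff by auto
  have TM: "sum a {..<N} \<in> Mset u" using sm unfolding summable_M_def by auto
  have 1: "lex_le (sum a {..<N}) s" using sup unfolding is_sup_M_def by blast
  have "lex_le (sum a F) (sum a {..<N})" if "finite F" for F
  proof -
    have "sum a F = sum a (F \<inter> {..<N})"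
      using that z by (intro sum.mono_neutral_right) (auto, metis not_le)
    also have "lex_le \<dots> (sum a {..<N})" using nn by (intro lex_le_sum_mono) auto
    finally show ?thesis .
  qed
  then have "lex_le s (sum a {..<N})" using sup TM unfolding is_sup_M_def by blast
  with 1 show ?thesis using lex_le_antisym by blast
qed

lemma obs_add:
  assumes obs: "observable u x" and S: "S \<in> sets borel" and T: "T \<in> sets borel"
    and d: "S \<inter> T = {}"
  shows "x (S \<union> T) = x S + x T"
proof -
  define A where "A = (\<lambda>m::nat. if m = 0 then S else if m = 1 then T else {})"
  have r: "range A \<subseteq> sets borel" using S T by (auto simp: A_def)
  have df: "disjoint_family A" using d by (auto simp: disjoint_family_on_def A_def)
  have U: "(\<Union>m. A m) = S \<union> T"
  proof
    show "(\<Union>m. A m) \<subseteq> S \<union> T" by (auto simp: A_def split: if_splits)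
    have "A 0 = S" "A 1 = T" by (auto simp: A_def)
    then show "S \<union> T \<subseteq> (\<Union>m. A m)" by blast
  qed
  have "has_sum_M u (\<lambda>m. x (A m)) (x (\<Union>m. A m))"
    using obs r df unfolding observable_def by blast
  then have "x (\<Union>m. A m) = sum (\<lambda>m. x (A m)) {..<2}"
    by (rule has_sum_fin) (auto simp: A_def obs_empty[OF obs])
  then show ?thesis using U by (simp add: numeral_2_eq_2 A_def)
qed

lemma obs_diff:
  assumes obs: "observable u x" and S: "S \<in> sets borel" and T: "T \<in> sets borel"
    and sub: "S \<subseteq> T"
  shows "x (T - S) = x T - x S" and "lex_le (x S) (x T)"
proof -
  have e: "T = S \<union> (T - S)" using sub by blast
  have "x T = x S + x (T - S)"
    by (subst e, rule obs_add[OF obs S]) (use S T in auto)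
  then show "x (T - S) = x T - x S" by (simp add: algebra_simps)
  have "lex_le (x S + 0) (x S + x (T - S))"
    using obs_Mset[OF obs, of "T - S"] S T by (intro lex_le_add_mono) (auto simp: Mset_iff)
  then show "lex_le (x S) (x T)" using \<open>x T = _\<close> by simp
qed

lemma obs_psum:
  assumes obs: "observable u x" and r: "range B \<subseteq> sets borel"
  shows "sum (\<lambda>m. x (disjointed B m)) {..<N} = x (\<Union>i<N. B i)"
proof (induction N)
  case 0
  then show ?case by (simp add: obs_empty[OF obs])
next
  case (Suc N)
  have BU: "(\<Union>i<N. B i) \<in> sets borel" using r by auto
  have BN: "B N \<in> sets borel" using r by auto
  have "(\<Union>i<Suc N. B i) = (\<Union>i<N. B i) \<union> (B N - (\<Union>i<N. B i))"
    by (auto simp: lessThan_Suc)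
  then have "x (\<Union>i<Suc N. B i) = x (\<Union>i<N. B i) + x (B N - (\<Union>i<N. B i))"
    using obs_add[OF obs BU, of "B N - (\<Union>i<N. B i)"] BU BN by auto
  then show ?case using Suc by (simp add: disjointed_def atLeast0LessThan)
qed

lemma obs_cont_below:
  assumes obs: "observable u x" and r: "range B \<subseteq> sets borel" and inc: "incseq B"
    and b: "b \<in> Mset u" and ub: "\<And>k. lex_le (x (B k)) b"
  shows "lex_le (x (\<Union>k. B k)) b"
proof -
  have rD: "range (disjointed B) \<subseteq> sets borel" using r by (rule sets.range_disjointed_sets)
  have "has_sum_M u (\<lambda>m. x (disjointed B m)) (x (\<Union>m. disjointed B m))"
    using obs rD disjoint_family_disjointed unfolding observable_def by blast
  then have hs: "has_sum_M u (\<lambda>m. x (disjointed B m)) (x (\<Union>m. B m))"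
    by (simp add: UN_disjointed_eq)
  have nn: "lex_le 0 (x (disjointed B m))" for m
    using obs_Mset[OF obs] rD by (auto simp: Mset_iff)
  have "lex_le (sum (\<lambda>m. x (disjointed B m)) F) b" if "finite F" for F
  proof -
    obtain k where k: "F \<subseteq> {..<k}" using \<open>finite F\<close> finite_nat_iff_bounded by blast
    have sub: "(\<Union>i<k. B i) \<subseteq> B k" using inc by (auto simp: incseq_def) (metis less_imp_le subsetD)
    have "lex_le (sum (\<lambda>m. x (disjointed B m)) F) (sum (\<lambda>m. x (disjointed B m)) {..<k})"
      using k nn by (intro lex_le_sum_mono) auto
    also have "\<dots> = x (\<Union>i<k. B i)" by (rule obs_psum[OF obs r])
    also have "lex_le \<dots> (x (B k))"
      using sub r by (intro obs_diff(2)[OF obs]) auto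
    also have "lex_le \<dots> b" by (rule ub)
    finally show ?thesis .
  qed
  with hs b show ?thesis unfolding has_sum_M_def is_sup_M_def by blast
qed

lemma obs_cont_above:
  assumes obs: "observable u x" and r: "range B \<subseteq> sets borel" and dec: "decseq B"
    and e: "(\<Inter>k. B k) = {}"
    and b: "b \<in> Mset u" and lb: "\<And>k. lex_le b (x (B k))"
  shows "lex_le b 0"
proof -
  define C where "C k = B 0 - B k" for k
  have rC: "range C \<subseteq> sets borel" using r by (auto simp: C_def)
  have iC: "incseq C" using dec by (auto simp: C_def incseq_def decseq_def)
  have UC: "(\<Union>k. C k) = B 0" using e by (auto simp: C_def)
  have B0: "B 0 \<in> sets borel" using r by auto
  have B0M: "x (B 0) \<in> Mset u" using obs_Mset[OF obs B0] .
  have bnn: "lex_le 0 b" using b by (simp add: Mset_iff)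
  have cM: "x (B 0) - b \<in> Mset u"
  proof -
    have "lex_le 0 (x (B 0) - b)" using lb[of 0] lex_le_diff by blast
    moreover have "lex_le (x (B 0) - b) (x (B 0) - 0)" by (rule lex_le_diff_anti[OF bnn])
    ultimately show ?thesis using B0M by (auto simp: Mset_iff intro: lex_le_trans)
  qed
  have "lex_le (x (C k)) (x (B 0) - b)" for k
  proof -
    have "B k \<subseteq> B 0" using dec by (auto simp: decseq_def)
    then have "x (C k) = x (B 0) - x (B k)" unfolding C_def using r B0 by (intro obs_diff(1)[OF obs]) auto
    then show ?thesis using lex_le_diff_anti[OF lb[of k]] by simp
  qed
  from obs_cont_below[OF obs rC iC cM this]
  have "lex_le (x (B 0)) (x (B 0) - b)" using UC by simp
  then have "lex_le (x (B 0) + (b - x (B 0))) (x (B 0) - b + (b - x (B 0)))"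
    by (intro lex_le_add_mono) auto
  then show ?thesis by simp
qed

lemma Delta_fold:
  assumes obs: "observable u x" and ab: "\<And>i. a $ i \<le> b $ i" and dL: "distinct L"
  shows "foldr (\<lambda>i K'. Delta i (a $ i) (b $ i) K') L (distr_fun x) s
    = x {y. \<forall>i. (i \<in> set L \<longrightarrow> a $ i \<le> y $ i \<and> y $ i < b $ i) \<and> (i \<notin> set L \<longrightarrow> y $ i < s $ i)}"
  using dL
proof (induction L arbitrary: s)
  case Nil
  then show ?case by (simp add: distr_fun_def)
next
  case (Cons j L)
  let ?S = "\<lambda>s. {y. \<forall>i. (i \<in> set L \<longrightarrow> a $ i \<le> y $ i \<and> y $ i < b $ i) \<and> (i \<notin> set L \<longrightarrow> y $ i < s $ i)}"
  have jL: "j \<notin> set L" and dL: "distinct L" using Cons by auto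
  have mb: "?S s' \<in> sets borel" for s' by measurable
  have sub: "?S (vupd s j (a $ j)) \<subseteq> ?S (vupd s j (b $ j))"
    using ab by (auto simp: vupd_def intro: less_le_trans)
  have eq: "?S (vupd s j (b $ j)) - ?S (vupd s j (a $ j))
     = {y. \<forall>i. (i \<in> set (j # L) \<longrightarrow> a $ i \<le> y $ i \<and> y $ i < b $ i) \<and> (i \<notin> set (j # L) \<longrightarrow> y $ i < s $ i)}"
    (is "?L = ?R")
  proof
    show "?L \<subseteq> ?R"
    proof
      fix y assume y: "y \<in> ?L"
      then have 1: "\<forall>i. (i \<in> set L \<longrightarrow> a $ i \<le> y $ i \<and> y $ i < b $ i) \<and> (i \<notin> set L \<longrightarrow> y $ i < vupd s j (b $ j) $ i)" by simp
      from y have 2: "y \<notin> ?S (vupd s j (a $ j))" by blast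
      have "\<not> y $ j < a $ j"
      proof
        assume "y $ j < a $ j"
        have "(i \<in> set L \<longrightarrow> a $ i \<le> y $ i \<and> y $ i < b $ i) \<and> (i \<notin> set L \<longrightarrow> y $ i < vupd s j (a $ j) $ i)" for i
          using 1[rule_format, of i] \<open>y $ j < a $ j\<close> by (cases "i = j") auto
        then have "y \<in> ?S (vupd s j (a $ j))" by blast
        with 2 show False by blast
      qed
      then show "y \<in> ?R" using 1 jL by (auto simp: vupd_def split: if_splits)
    qed
    show "?R \<subseteq> ?L"
    proof
      fix y assume y: "y \<in> ?R"
      have "\<not> y $ j < vupd s j (a $ j) $ j" using y by auto
      then have "y \<notin> ?S (vupd s j (a $ j))" using jL by blast
      moreover have "y \<in> ?S (vupd s j (b $ j))" using y jL by auto
      ultimately show "y \<in> ?L" by blast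
    qed
  qed
  have "foldr (\<lambda>i K'. Delta i (a $ i) (b $ i) K') (j # L) (distr_fun x) s
      = x (?S (vupd s j (b $ j))) - x (?S (vupd s j (a $ j)))"
    using Cons.IH[OF dL] by (simp add: Delta_def)
  also have "\<dots> = x ?R" using obs_diff(1)[OF obs mb mb sub] eq by simp
  finally show ?case .
qed

theorem lemma3p2:
  fixes u :: "'h::linordered_ab_group_add"
    and x :: "(real, 'n::{finite,linorder}) vec set \<Rightarrow> 'h \<times> 'g::lattice_ab_group_add"
  assumes "strong_unit u"
    and "dedekind_sigma_complete TYPE('g)"
    and "observable u x"
  shows "(\<forall>s t. (\<forall>i. s $ i \<le> t $ i) \<longrightarrow> lex_le (distr_fun x s) (distr_fun x t))
    \<and> is_sup_M u (range (distr_fun x)) (u, 0)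
    \<and> (\<forall>t. is_sup_M u (distr_fun x ` {s. \<forall>i. s $ i < t $ i}) (distr_fun x t))
    \<and> (\<forall>i s. is_inf_M u ((\<lambda>r. distr_fun x (vupd s i r)) ` UNIV) (0, 0))
    \<and> (\<forall>a b s. (\<forall>i. a $ i \<le> b $ i) \<longrightarrow>
          lex_le (0, 0) (Delta_all a b (distr_fun x) s) \<and> lex_le (Delta_all a b (distr_fun x) s) (u, 0))"
proof -
  note obs = assms(3)
  have z: "(0::'h, 0::'g) = 0" by (simp add: zero_prod_def)
  have mb: "{y::(real, 'n) vec. \<forall>i. y $ i < t $ i} \<in> sets borel" for t by measurable
  have FM: "distr_fun x t \<in> Mset u" for t unfolding distr_fun_def by (rule obs_Mset[OF obs mb])
  have mono: "lex_le (distr_fun x s) (distr_fun x t)" if "\<forall>i. s $ i \<le> t $ i" for s t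
    unfolding distr_fun_def using that
    by (intro obs_diff(2)[OF obs mb mb]) (auto intro: less_le_trans)
  have uM: "(u, 0) \<in> Mset u"
    using assms(1) by (auto simp: Mset_iff strong_unit_def lex_le_def le_less)
  have P2: "is_sup_M u (range (distr_fun x)) (u, 0)"
    unfolding is_sup_M_def
  proof (intro conjI ballI impI uM)
    show "lex_le a (u, 0)" if "a \<in> range (distr_fun x)" for a
      using that FM by (auto simp: Mset_iff)
    fix c assume c: "c \<in> Mset u" and ub: "\<forall>a\<in>range (distr_fun x). lex_le a c"
    define B where "B k = {y::(real, 'n) vec. \<forall>i. y $ i < (\<chi> i. real k) $ i}" for k :: nat
    have rB: "range B \<subseteq> sets borel" unfolding B_def using mb by auto
    have iB: "incseq B" unfolding B_def incseq_def by (auto intro: less_le_trans)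
    have UB: "(\<Union>k. B k) = UNIV"
    proof (intro set_eqI iffI)
      fix y :: "(real, 'n) vec"
      obtain k :: nat where k: "Max (range (\<lambda>i. y $ i)) < real k" using reals_Archimedean2 by blast
      have "y $ i < real k" for i
        using k Max_ge[of "range (\<lambda>i. y $ i)" "y $ i"] by auto
      then show "y \<in> (\<Union>k. B k)" by (auto simp: B_def)
    qed auto
    have "lex_le (x (B k)) c" for k
      using ub[rule_format, OF rangeI[of "distr_fun x" "\<chi> i. real k"]] by (simp add: B_def distr_fun_def)
    from obs_cont_below[OF obs rB iB c this]
    have "lex_le (x (\<Union>k. B k)) c" .
    then show "lex_le (u, 0) c" using UB obs unfolding observable_def by simp
  qed
  have P3: "is_sup_M u (distr_fun x ` {s. \<forall>i. s $ i < t $ i}) (distr_fun x t)" for t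
    unfolding is_sup_M_def
  proof (intro conjI ballI impI FM)
    show "lex_le a (distr_fun x t)" if "a \<in> distr_fun x ` {s. \<forall>i. s $ i < t $ i}" for a
      using that mono by (auto intro: less_imp_le)
    fix c assume c: "c \<in> Mset u" and ub: "\<forall>a\<in>distr_fun x ` {s. \<forall>i. s $ i < t $ i}. lex_le a c"
    define B where "B k = {y::(real, 'n) vec. \<forall>i. y $ i < (\<chi> i. t $ i - inverse (real (Suc k))) $ i}" for k :: nat
    have rB: "range B \<subseteq> sets borel" unfolding B_def using mb by auto
    have iB: "incseq B"
    proof (rule incseq_SucI)
      fix k
      have "inverse (real (Suc (Suc k))) \<le> inverse (real (Suc k))"
        by (intro le_imp_inverse_le) auto
      then show "B k \<subseteq> B (Suc k)" unfolding B_def by (auto intro: less_le_trans)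
    qed
    have UB: "(\<Union>k. B k) = {y. \<forall>i. y $ i < t $ i}"
    proof (intro set_eqI iffI)
      fix y :: "(real, 'n) vec" assume y: "y \<in> {y. \<forall>i. y $ i < t $ i}"
      let ?m = "Min (range (\<lambda>i. t $ i - y $ i))"
      have "?m \<in> range (\<lambda>i. t $ i - y $ i)" by (intro Min_in) auto
      then have "0 < ?m" using y by auto
      then obtain k where k: "inverse (real (Suc k)) < ?m" using reals_Archimedean by blast
      have "y $ i < t $ i - inverse (real (Suc k))" for i
      proof -
        have "?m \<le> t $ i - y $ i" by (rule Min_le) auto
        then show ?thesis using k by linarith
      qed
      then show "y \<in> (\<Union>k. B k)" by (auto simp: B_def)
    next
      fix y assume "y \<in> (\<Union>k. B k)"
      then obtain k where "y \<in> B k" by auto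
      then show "y \<in> {y. \<forall>i. y $ i < t $ i}" unfolding B_def
        by (auto intro: less_trans[of _ _ "t $ _"])
    qed
    have "lex_le (x (B k)) c" for k
    proof -
      have mem: "(\<chi> i. t $ i - inverse (real (Suc k))) \<in> {s. \<forall>i. s $ i < t $ i}" by simp
      show ?thesis using ub[rule_format, OF imageI[OF mem, of "distr_fun x"]] unfolding B_def distr_fun_def by simp
    qed
    from obs_cont_below[OF obs rB iB c this]
    show "lex_le (distr_fun x t) c" using UB unfolding distr_fun_def by simp
  qed
  have P4: "is_inf_M u ((\<lambda>r. distr_fun x (vupd s i r)) ` UNIV) (0, 0)" for i s
    unfolding is_inf_M_def
  proof (intro conjI ballI impI)
    show "(0, 0) \<in> Mset u" using uM by (simp add: Mset_iff zero_prod_def)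
    show "lex_le (0, 0) a" if "a \<in> range (\<lambda>r. distr_fun x (vupd s i r))" for a
      using that FM by (auto simp: Mset_iff zero_prod_def)
    fix c assume c: "c \<in> Mset u" and lb: "\<forall>a\<in>range (\<lambda>r. distr_fun x (vupd s i r)). lex_le c a"
    define B where "B k = {y::(real, 'n) vec. \<forall>j. y $ j < (vupd s i (- real k)) $ j}" for k :: nat
    have rB: "range B \<subseteq> sets borel" unfolding B_def using mb by auto
    have dB: "decseq B" unfolding B_def decseq_def vupd_def by (auto intro: less_le_trans)
    have IB: "(\<Inter>k. B k) = {}"
    proof (rule ccontr)
      assume "(\<Inter>k. B k) \<noteq> {}"
      then obtain y where y: "\<And>k. y \<in> B k" by auto
      obtain k :: nat where k: "- y $ i < real k" using reals_Archimedean2 by blast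
      from y[of k] have "\<forall>j. y $ j < vupd s i (- real k) $ j" by (simp add: B_def)
      then have "y $ i < vupd s i (- real k) $ i" by blast
      then have "y $ i < - real k" by simp
      with k show False by simp
    qed
    have "lex_le c (x (B k))" for k using lb unfolding B_def distr_fun_def by auto
    from obs_cont_above[OF obs rB dB IB c this]
    show "lex_le c (0, 0)" by (simp add: zero_prod_def)
  qed
  have P5: "lex_le (0, 0) (Delta_all a b (distr_fun x) s) \<and> lex_le (Delta_all a b (distr_fun x) s) (u, 0)"
    if ab: "\<forall>i. a $ i \<le> b $ i" for a b s
  proof -
    let ?L = "sorted_list_of_set (UNIV :: 'n set)"
    have "Delta_all a b (distr_fun x) s = x {y. \<forall>i. (i \<in> set ?L \<longrightarrow> a $ i \<le> y $ i \<and> y $ i < b $ i) \<and> (i \<notin> set ?L \<longrightarrow> y $ i < s $ i)}"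
      unfolding Delta_all_def using ab by (intro Delta_fold[OF obs]) auto
    moreover have "{y::(real, 'n) vec. \<forall>i. (i \<in> set ?L \<longrightarrow> a $ i \<le> y $ i \<and> y $ i < b $ i) \<and> (i \<notin> set ?L \<longrightarrow> y $ i < s $ i)} \<in> sets borel"
      by measurable
    ultimately show ?thesis using obs_Mset[OF obs] by (auto simp: Mset_iff zero_prod_def)
  qed
  show ?thesis using mono P2 P3 P4 P5 by blast
qed

end
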